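(* For every pure context $F$, term $t$ and variable $x\notin\mathrm{fv}(F)$, we have $(\lambda x.F[x])\,t \sim F[t]$.
   Context: The calculus $\lambda_{\mathcal S}$. Terms: $t ::= x \mid \lambda x.t \mid t\,t \mid \mathcal{S}k.t \mid \langle t\rangle$ (shift and reset); values: $v ::= \lambda x.t \mid x$. $\lambda x.t$ binds $x$, $\mathcal{S}k.t$ binds $k$; terms up to $\alpha$-conversion; $\mathrm{fv}$ free variables; capture-avoiding substitution $t\{v/x\}$. Pure contexts $F ::= [\,] \mid v\,F \mid F\,t$; evaluation contexts $E ::= [\,] \mid v\,E \mid E\,t \mid \langle E\rangle$. Reduction: $E[(\lambda x.t)\,v] \to E[t\{v/x\}]$; $E[\langle F[\mathcal{S}k.t]\rangle] \to E[\langle t\{\lambda x.\langle F[x]\rangle/k\}\rangle]$ ($x\notin\mathrm{fv}(F)$); $E[\langle v\rangle]\to E[v]$. $t\Downarrow t'$ iff $t\to^*t'$ and $t'$ irreducible. Normal forms: values, control stuck terms $F[\mathcal{S}k.t]$, open stuck terms $E[x\,v]$. Fresh: not free in the terms/contexts considered. Normal form bisimilarity $\sim$: for a relation $\mathcal R$ on terms, $E_0\mathrel{\mathcal R}E_1$ iff either $E_0=E_0'[\langle F_0\rangle]$, $E_1=E_1'[\langle F_1\rangle]$ ($F_i$ pure) with $E_0'[x]\mathrel{\mathcal R}E_1'[x]$ and $\langle F_0[x]\rangle\mathrel{\mathcal R}\langle F_1[x]\rangle$ ($x$ fresh), or $E_0=F_0$, $E_1=F_1$ pure with $F_0[x]\mathrel{\mathcal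 R}F_1[x]$ ($x$ fresh). $v\mathbin{@}y$ is $x\,y$ if $v=x$, $t\{y/x\}$ if $v=\lambda x.t$. $\mathcal R^{\mathrm{nf}}$ on normal forms: $v_0\mathrel{\mathcal R^{\mathrm{nf}}}v_1$ if $v_0\mathbin{@}x\mathrel{\mathcal R}v_1\mathbin{@}x$ ($x$ fresh); $F_0[\mathcal{S}k.t_0]\mathrel{\mathcal R^{\mathrm{nf}}}F_1[\mathcal{S}k.t_1]$ if $F_0\mathrel{\mathcal R}F_1$ and $\langle t_0\rangle\mathrel{\mathcal R}\langle t_1\rangle$; $E_0[x\,v_0]\mathrel{\mathcal R^{\mathrm{nf}}}E_1[x\,v_1]$ if $E_0\mathrel{\mathcal R}E_1$ and $v_0\mathrel{\mathcal R^{\mathrm{nf}}}v_1$. $\mathcal R$ is a normal form simulation if $t_0\mathrel{\mathcal R}t_1$ and $t_0\Downarrow t_0'$ imply $t_1\Downarrow t_1'$ with $t_0'\mathrel{\mathcal R^{\mathrm{nf}}}t_1'$; a bisimulation if $\mathcal R$ and $\mathcal R^{-1}$ are simulations; $\sim$ is the largest normal form bisimulation. *)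

theory Defs
  imports Main
begin

text \<open>Terms of lambda_S (shift/reset) with de Bruijn indices, so that terms are
  identified up to alpha-conversion. A variable is a natural number (de Bruijn index).\<close>

datatype trm = Var nat | Lam trm | App trm trm | Shift trm | Reset trm

fun is_val :: "trm \<Rightarrow> bool" where
  "is_val (Var _) = True"
| "is_val (Lam _) = True"
| "is_val _ = False"

primrec lift :: "nat \<Rightarrow> trm \<Rightarrow> trm" where
  "lift k (Var n) = (if n < k then Var n else Var (Suc n))"
| "lift k (Lam t) = Lam (lift (Suc k) t)"
| "lift k (App s t) = App (lift k s) (lift k t)"
| "lift k (Shift t) = Shift (lift (Suc k) t)"
| "lift k (Reset t) = Reset (lift k t)"

text \<open>subst k u t: capture-avoiding substitution of u for index k in t
  (indices above k are decremented, since the binder of k disappears).\<close>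
primrec subst :: "nat \<Rightarrow> trm \<Rightarrow> trm \<Rightarrow> trm" where
  "subst k u (Var n) = (if n < k then Var n else if n = k then u else Var (n - 1))"
| "subst k u (Lam t) = Lam (subst (Suc k) (lift 0 u) t)"
| "subst k u (App s t) = App (subst k u s) (subst k u t)"
| "subst k u (Shift t) = Shift (subst (Suc k) (lift 0 u) t)"
| "subst k u (Reset t) = Reset (subst k u t)"

text \<open>Contexts (they contain no binders around the hole).\<close>
datatype ctx = Hole | CAppR trm ctx | CAppL ctx trm | CReset ctx

primrec plug :: "ctx \<Rightarrow> trm \<Rightarrow> trm" where
  "plug Hole t = t"
| "plug (CAppR v E) t = App v (plug E t)"
| "plug (CAppL E s) t = App (plug E t) s"
| "plug (CReset E) t = Reset (plug E t)"

primrec comp :: "ctx \<Rightarrow> ctx \<Rightarrow> ctx" where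
  "comp Hole E' = E'"
| "comp (CAppR v E) E' = CAppR v (comp E E')"
| "comp (CAppL E s) E' = CAppL (comp E E') s"
| "comp (CReset E) E' = CReset (comp E E')"

primrec liftc :: "ctx \<Rightarrow> ctx" where
  "liftc Hole = Hole"
| "liftc (CAppR v E) = CAppR (lift 0 v) (liftc E)"
| "liftc (CAppL E s) = CAppL (liftc E) (lift 0 s)"
| "liftc (CReset E) = CReset (liftc E)"

primrec pure :: "ctx \<Rightarrow> bool" where
  "pure Hole = True"
| "pure (CAppR v F) = (is_val v \<and> pure F)"
| "pure (CAppL F s) = pure F"
| "pure (CReset F) = False"

primrec ectx :: "ctx \<Rightarrow> bool" where
  "ectx Hole = True"
| "ectx (CAppR v E) = (is_val v \<and> ectx E)"
| "ectx (CAppL E s) = ectx E"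
| "ectx (CReset E) = ectx E"

text \<open>Plugging a fresh variable x into a context: all free indices of the context are
  shifted up and the fresh variable is index 0.\<close>
definition plug_fresh :: "ctx \<Rightarrow> trm" where
  "plug_fresh E = plug (liftc E) (Var 0)"

inductive step :: "trm \<Rightarrow> trm \<Rightarrow> bool" where
  beta: "ectx E \<Longrightarrow> is_val v \<Longrightarrow> step (plug E (App (Lam t) v)) (plug E (subst 0 v t))"
| shift: "ectx E \<Longrightarrow> pure F \<Longrightarrow>
     step (plug E (Reset (plug F (Shift t))))
          (plug E (Reset (subst 0 (Lam (Reset (plug_fresh F))) t)))"
| reset: "ectx E \<Longrightarrow> is_val v \<Longrightarrow> step (plug E (Reset v)) (plug E v)"

definition irreducible :: "trm \<Rightarrow> bool" where
  "irreducible t \<longleftrightarrow> \<not> (\<exists>u. step t u)"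

definition eval :: "trm \<Rightarrow> trm \<Rightarrow> bool" where
  "eval t t' \<longleftrightarrow> step\<^sup>*\<^sup>* t t' \<and> irreducible t'"

text \<open>v @ x for a fresh variable x (index 0 after shifting): for v = \<lambda>x.t this is t
  (with x free); for v = y this is y x.\<close>
fun app_fresh :: "trm \<Rightarrow> trm" where
  "app_fresh (Lam t) = t"
| "app_fresh (Var n) = App (Var (Suc n)) (Var 0)"
| "app_fresh t = t"

definition ctx_rel :: "(trm \<Rightarrow> trm \<Rightarrow> bool) \<Rightarrow> ctx \<Rightarrow> ctx \<Rightarrow> bool" where
  "ctx_rel R E0 E1 \<longleftrightarrow>
     (\<exists>E0' F0 E1' F1. ectx E0' \<and> pure F0 \<and> ectx E1' \<and> pure F1 \<and>
        E0 = comp E0' (CReset F0) \<and> E1 = comp E1' (CReset F1) \<and>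
        R (plug_fresh E0') (plug_fresh E1') \<and>
        R (Reset (plug_fresh F0)) (Reset (plug_fresh F1)))
   \<or> (pure E0 \<and> pure E1 \<and> R (plug_fresh E0) (plug_fresh E1))"

definition val_rel :: "(trm \<Rightarrow> trm \<Rightarrow> bool) \<Rightarrow> trm \<Rightarrow> trm \<Rightarrow> bool" where
  "val_rel R v0 v1 \<longleftrightarrow> is_val v0 \<and> is_val v1 \<and> R (app_fresh v0) (app_fresh v1)"

definition nf_rel :: "(trm \<Rightarrow> trm \<Rightarrow> bool) \<Rightarrow> trm \<Rightarrow> trm \<Rightarrow> bool" where
  "nf_rel R a b \<longleftrightarrow>
     val_rel R a b
   \<or> (\<exists>F0 F1 t0 t1. pure F0 \<and> pure F1 \<and>
        a = plug F0 (Shift t0) \<and> b = plug F1 (Shift t1) \<and>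
        ctx_rel R F0 F1 \<and> R (Reset t0) (Reset t1))
   \<or> (\<exists>E0 E1 x v0 v1. ectx E0 \<and> ectx E1 \<and>
        a = plug E0 (App (Var x) v0) \<and> b = plug E1 (App (Var x) v1) \<and>
        ctx_rel R E0 E1 \<and> val_rel R v0 v1)"

definition nf_simulation :: "(trm \<Rightarrow> trm \<Rightarrow> bool) \<Rightarrow> bool" where
  "nf_simulation R \<longleftrightarrow>
     (\<forall>t0 t1 t0'. R t0 t1 \<and> eval t0 t0' \<longrightarrow> (\<exists>t1'. eval t1 t1' \<and> nf_rel R t0' t1'))"

definition nf_bisimulation :: "(trm \<Rightarrow> trm \<Rightarrow> bool) \<Rightarrow> bool" where
  "nf_bisimulation R \<longleftrightarrow> nf_simulation R \<and> nf_simulation (conversep R)"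

definition nf_bisimilar :: "trm \<Rightarrow> trm \<Rightarrow> bool" where
  "nf_bisimilar t0 t1 \<longleftrightarrow> (\<exists>R. nf_bisimulation R \<and> R t0 t1)"

end

theory Submission
  imports Defs
begin

lemma lift_lift: "i \<le> j \<Longrightarrow> lift (Suc j) (lift i w) = lift i (lift j w)"
  by (induction w arbitrary: i j) auto

lemma subst_lift: "subst k u (lift k w) = w"
  by (induction w arbitrary: k u) auto

lemma is_val_lift[simp]: "is_val (lift k v) = is_val v"
  by (cases v) auto

lemma plug_comp[simp]: "plug (comp E G) t = plug E (plug G t)"
  by (induction E) auto

lemma comp_assoc: "comp (comp E G) H = comp E (comp G H)"
  by (induction E) auto

lemma liftc_comp[simp]: "liftc (comp E G) = comp (liftc E) (liftc G)"
  by (induction E) auto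

lemma pure_comp[simp]: "pure (comp E G) = (pure E \<and> pure G)"
  by (induction E) auto

lemma ectx_comp[simp]: "ectx (comp E G) = (ectx E \<and> ectx G)"
  by (induction E) auto

lemma pure_liftc[simp]: "pure (liftc E) = pure E"
  by (induction E) auto

lemma ectx_liftc[simp]: "ectx (liftc E) = ectx E"
  by (induction E) auto

lemma pure_ectx: "pure E \<Longrightarrow> ectx E"
  by (induction E) auto

lemma lift1_plug: "lift (Suc 0) (plug (liftc F) s) = plug (liftc (liftc F)) (lift (Suc 0) s)"
  by (induction F) (auto simp: lift_lift)

lemma subst_plug: "subst 0 u (plug (liftc F) s) = plug F (subst 0 u s)"
  by (induction F) (auto simp: subst_lift)

lemma subst_plug_fresh: "subst 0 u (plug_fresh F) = plug F u"
  unfolding plug_fresh_def by (simp add: subst_plug)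

lemma pf_app: "plug_fresh (CAppR (Lam (plug_fresh F)) E) = App (Lam (plug_fresh (liftc F))) (plug_fresh E)"
  unfolding plug_fresh_def by (simp add: lift1_plug)

lemma pf_comp: "plug_fresh (comp F E) = plug (liftc F) (plug_fresh E)"
  unfolding plug_fresh_def by simp

definition hd :: "trm \<Rightarrow> bool" where
  "hd r \<longleftrightarrow> (\<exists>t v. r = App (Lam t) v \<and> is_val v) \<or> (\<exists>F t. pure F \<and> r = Reset (plug F (Shift t)))
     \<or> (\<exists>v. is_val v \<and> r = Reset v) \<or> (\<exists>x v. is_val v \<and> r = App (Var x) v)"

lemma hd_not_val: "hd r \<Longrightarrow> \<not> is_val (plug E r)"
  by (cases E) (auto simp: hd_def)

lemma shift_not_val: "pure F \<Longrightarrow> \<not> is_val (plug F (Shift t))"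
  by (cases F) auto

lemma lemA: "pure F \<Longrightarrow> ectx E \<Longrightarrow> hd r \<Longrightarrow> plug F (Shift t) \<noteq> plug E r"
proof (induction F arbitrary: E)
  case Hole then show ?case by (cases E) (auto simp: hd_def)
next
  case (CAppR v F)
  show ?case
  proof (cases E)
    case Hole then show ?thesis using CAppR shift_not_val[of F t]
      by (auto simp: hd_def)
  next
    case (CAppR w E') then show ?thesis using CAppR.IH CAppR.prems by auto
  next
    case (CAppL E' s) then show ?thesis using CAppR.prems hd_not_val[of r E'] by auto
  qed auto
next
  case (CAppL F s)
  show ?case
  proof (cases E)
    case Hole then show ?thesis using CAppL shift_not_val[of F t]
      by (auto simp: hd_def)
  next
    case (CAppR w E') then show ?thesis using CAppL.prems shift_not_val[of F t] by auto
  next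
    case (CAppL E' s) then show ?thesis using CAppL.IH CAppL.prems by auto
  qed auto
qed auto

lemma lemC: "pure F \<Longrightarrow> pure F' \<Longrightarrow> plug F (Shift t) = plug F' (Shift t') \<Longrightarrow> F = F' \<and> t = t'"
proof (induction F arbitrary: F')
  case Hole then show ?case by (cases F') auto
next
  case (CAppR v F)
  show ?case
  proof (cases F')
    case (CAppL G s) then show ?thesis using CAppR.prems shift_not_val[of G t'] by auto
  next
    case (CAppR w G) then show ?thesis using CAppR.prems CAppR.IH[of G] by auto
  qed (use CAppR.prems in auto)
next
  case (CAppL F s)
  show ?case
  proof (cases F')
    case (CAppR w G) then show ?thesis using CAppL.prems shift_not_val[of F t] by auto
  next
    case (CAppL G s') then show ?thesis using CAppL.prems CAppL.IH[of G] by auto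
  qed (use CAppL.prems in auto)
qed auto

lemma hd_nonhole: "hd r1 \<Longrightarrow> ectx E2 \<Longrightarrow> hd r2 \<Longrightarrow> r1 = plug E2 r2 \<Longrightarrow> E2 = Hole"
proof (cases E2)
  case (CAppR w E')
  assume a: "hd r1" "ectx E2" "hd r2" "r1 = plug E2 r2"
  have "\<not> is_val (plug E' r2)" using hd_not_val a(3) by blast
  then show ?thesis using CAppR a(1,4) unfolding hd_def[of r1] by auto
next
  case (CAppL E' s)
  assume a: "hd r1" "ectx E2" "hd r2" "r1 = plug E2 r2"
  have "\<not> is_val (plug E' r2)" using hd_not_val a(3) by blast
  then show ?thesis using CAppL a(1,4) unfolding hd_def[of r1] by auto
next
  case (CReset E')
  assume a: "hd r1" "ectx E2" "hd r2" "r1 = plug E2 r2"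
  have "\<not> is_val (plug E' r2)" using hd_not_val a(3) by blast
  moreover have "\<And>F t. pure F \<Longrightarrow> plug E' r2 \<noteq> plug F (Shift t)"
    using lemA a(2,3) CReset by (metis ectx.simps(4))
  ultimately show ?thesis using CReset a(1,4) unfolding hd_def[of r1] by auto
qed simp

lemma unique_dec: "ectx E1 \<Longrightarrow> ectx E2 \<Longrightarrow> hd r1 \<Longrightarrow> hd r2 \<Longrightarrow> plug E1 r1 = plug E2 r2
  \<Longrightarrow> E1 = E2 \<and> r1 = r2"
proof (induction E1 arbitrary: E2)
  case Hole
  then have "r1 = plug E2 r2" by simp
  then have "E2 = Hole" using hd_nonhole[of r1 E2 r2] Hole.prems by blast
  then show ?case using Hole.prems by simp
next
  case (CAppR v E)
  show ?case
  proof (cases E2)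
    case Hole
    then have "r2 = plug (CAppR v E) r1" using CAppR.prems by simp
    then have "CAppR v E = Hole" using hd_nonhole[of r2 "CAppR v E" r1] CAppR.prems by blast
    then show ?thesis by simp
  next
    case (CAppR w E') then show ?thesis using CAppR.IH CAppR.prems by auto
  next
    case (CAppL E' s) then show ?thesis using CAppR.prems hd_not_val[of r2 E'] by auto
  qed (use CAppR.prems in auto)
next
  case (CAppL E s)
  show ?case
  proof (cases E2)
    case Hole
    then have "r2 = plug (CAppL E s) r1" using CAppL.prems by simp
    then have "CAppL E s = Hole" using hd_nonhole[of r2 "CAppL E s" r1] CAppL.prems by blast
    then show ?thesis by simp
  next
    case (CAppR w E') then show ?thesis using CAppL.prems hd_not_val[of r1 E] by auto
  next
    case (CAppL E' s) then show ?thesis using CAppL.IH CAppL.prems by auto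
  qed (use CAppL.prems in auto)
next
  case (CReset E)
  show ?case
  proof (cases E2)
    case Hole
    then have "r2 = plug (CReset E) r1" using CReset.prems by simp
    then have "CReset E = Hole" using hd_nonhole[of r2 "CReset E" r1] CReset.prems by blast
    then show ?thesis by simp
  next
    case (CReset E') then show ?thesis using CReset.IH CReset.prems by auto
  qed (use CReset.prems in auto)
qed

lemma step_dec: "step x y \<Longrightarrow> \<exists>E r. ectx E \<and> hd r \<and> x = plug E r \<and> \<not>(\<exists>n w. r = App (Var n) w)"
proof (induction rule: step.induct)
  case (beta E v t) then show ?case
    by (intro exI[of _ E] exI[of _ "App (Lam t) v"]) (auto simp: hd_def)
next
  case (shift E F t) then show ?case
    by (intro exI[of _ E] exI[of _ "Reset (plug F (Shift t))"]) (auto simp: hd_def)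
next
  case (reset E v) then show ?case
    by (intro exI[of _ E] exI[of _ "Reset v"]) (auto simp: hd_def)
qed

lemma determ: "step a b \<Longrightarrow> step a c \<Longrightarrow> b = c"
proof (induction rule: step.induct)
  case (beta E v t)
  from beta.prems show ?case
  proof cases
    case (beta E' v' t')
    then show ?thesis using unique_dec[of E E' "App (Lam t) v" "App (Lam t') v'"] beta.hyps
      by (auto simp: hd_def)
  next
    case (shift E' F t')
    then show ?thesis using unique_dec[of E E' "App (Lam t) v" "Reset (plug F (Shift t'))"] beta.hyps
      by (auto simp: hd_def)
  next
    case (reset E' v')
    then show ?thesis using unique_dec[of E E' "App (Lam t) v" "Reset v'"] beta.hyps
      by (auto simp: hd_def)
  qed
next
  case (shift E F t)
  from shift.prems show ?case
  proof cases
    case (beta E' v' t')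
    then show ?thesis using unique_dec[of E E' "Reset (plug F (Shift t))" "App (Lam t') v'"] shift.hyps
      by (auto simp: hd_def)
  next
    case (shift E' F' t')
    then show ?thesis using unique_dec[of E E' "Reset (plug F (Shift t))" "Reset (plug F' (Shift t'))"]
      shift.hyps lemC[of F F' t t']
      by (auto simp: hd_def)
  next
    case (reset E' v')
    then show ?thesis using unique_dec[of E E' "Reset (plug F (Shift t))" "Reset v'"] shift.hyps
      shift_not_val[of F t]
      by (auto simp: hd_def)
  qed
next
  case (reset E v)
  from reset.prems show ?case
  proof cases
    case (beta E' v' t')
    then show ?thesis using unique_dec[of E E' "Reset v" "App (Lam t') v'"] reset.hyps
      by (auto simp: hd_def)
  next
    case (shift E' F' t')
    then show ?thesis using unique_dec[of E E' "Reset v" "Reset (plug F' (Shift t'))"] reset.hyps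
      shift_not_val[of F' t']
      by (auto simp: hd_def)
  next
    case (reset E' v')
    then show ?thesis using unique_dec[of E E' "Reset v" "Reset v'"] reset.hyps
      by (auto simp: hd_def)
  qed
qed

lemma step_ctx: "step a b \<Longrightarrow> ectx C \<Longrightarrow> step (plug C a) (plug C b)"
proof (induction rule: step.induct)
  case (beta E v t)
  then show ?case using step.beta[of "comp C E" v t] by simp
next
  case (shift E F t)
  then show ?case using step.shift[of "comp C E" F t] by simp
next
  case (reset E v)
  then show ?case using step.reset[of "comp C E" v] by simp
qed

lemma star_ctx: "step\<^sup>*\<^sup>* a b \<Longrightarrow> ectx C \<Longrightarrow> step\<^sup>*\<^sup>* (plug C a) (plug C b)"
  by (induction rule: rtranclp_induct) (auto intro: rtranclp.rtrancl_into_rtrancl step_ctx)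

lemma irr_shift: "pure F \<Longrightarrow> irreducible (plug F (Shift s))"
  unfolding irreducible_def using step_dec lemA by blast

lemma irr_open: "ectx E \<Longrightarrow> is_val v \<Longrightarrow> irreducible (plug E (App (Var x) v))"
  unfolding irreducible_def
proof
  assume a: "ectx E" "is_val v" "\<exists>u. step (plug E (App (Var x) v)) u"
  then obtain E' r where "ectx E'" "hd r" "plug E (App (Var x) v) = plug E' r"
    "\<not>(\<exists>n w. r = App (Var n) w)" using step_dec by blast
  then show False using unique_dec[of E E' "App (Var x) v" r] a by (auto simp: hd_def)
qed

lemma irr_sub: "irreducible (plug C t) \<Longrightarrow> ectx C \<Longrightarrow> irreducible t"
  unfolding irreducible_def using step_ctx by blast

lemma classify: "irreducible t \<Longrightarrow> is_val t \<or> (\<exists>F s. pure F \<and> t = plug F (Shift s))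
   \<or> (\<exists>E x v. ectx E \<and> is_val v \<and> t = plug E (App (Var x) v))"
proof (induction t)
  case (Var n) then show ?case by simp
next
  case (Lam t) then show ?case by simp
next
  case (Shift t) then show ?case by (intro disjI2 disjI1 exI[of _ Hole]) auto
next
  case (Reset s)
  have irs: "irreducible s" using irr_sub[of "CReset Hole" s] Reset.prems by simp
  from Reset.IH[OF irs] show ?case
  proof (elim disjE exE conjE)
    assume "is_val s"
    then have "step (Reset s) s" using step.reset[of Hole s] by simp
    then show ?thesis using Reset.prems by (auto simp: irreducible_def)
  next
    fix F s' assume "pure F" "s = plug F (Shift s')"
    then have "step (Reset s) (Reset (subst 0 (Lam (Reset (plug_fresh F))) s'))"
      using step.shift[of Hole F s'] by simp
    then show ?thesis using Reset.prems by (auto simp: irreducible_def)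
  next
    fix E x v assume "ectx E" "is_val v" "s = plug E (App (Var x) v)"
    then show ?thesis by (intro disjI2 exI[of _ "CReset E"]) auto
  qed
next
  case (App s u)
  have irs: "irreducible s" using irr_sub[of "CAppL Hole u" s] App.prems by simp
  from App.IH(1)[OF irs] show ?case
  proof (elim disjE exE conjE)
    assume vs: "is_val s"
    have iru: "irreducible u" using irr_sub[of "CAppR s Hole" u] App.prems vs by simp
    from App.IH(2)[OF iru] show ?thesis
    proof (elim disjE exE conjE)
      assume vu: "is_val u"
      show ?thesis
      proof (cases s)
        case (Var n) then show ?thesis using vu by (intro disjI2 exI[of _ Hole]) auto
      next
        case (Lam b)
        then have "step (App s u) (subst 0 u b)" using step.beta[of Hole u b] vu by simp
        then show ?thesis using App.prems by (auto simp: irreducible_def)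
      qed (use vs in auto)
    next
      fix F s' assume "pure F" "u = plug F (Shift s')"
      then show ?thesis using vs by (intro disjI2 disjI1 exI[of _ "CAppR s F"]) auto
    next
      fix E x v assume "ectx E" "is_val v" "u = plug E (App (Var x) v)"
      then show ?thesis using vs by (intro disjI2 exI[of _ "CAppR s E"]) auto
    qed
  next
    fix F s' assume "pure F" "s = plug F (Shift s')"
    then show ?thesis by (intro disjI2 disjI1 exI[of _ "CAppL F u"]) auto
  next
    fix E x v assume "ectx E" "is_val v" "s = plug E (App (Var x) v)"
    then show ?thesis by (intro disjI2 exI[of _ "CAppL E u"]) auto
  qed
qed

lemma star_irr: "step\<^sup>*\<^sup>* x c \<Longrightarrow> irreducible x \<Longrightarrow> c = x"
  by (induction rule: converse_rtranclp_induct) (auto simp: irreducible_def)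

lemma star_step: "step\<^sup>*\<^sup>* x c \<Longrightarrow> irreducible c \<Longrightarrow> step x y \<Longrightarrow> step\<^sup>*\<^sup>* y c"
proof (induction rule: converse_rtranclp_induct)
  case base then show ?case by (auto simp: irreducible_def)
next
  case (step x z) then show ?case using determ by blast
qed

lemma eval_ctx: "step\<^sup>*\<^sup>* x c \<Longrightarrow> irreducible c \<Longrightarrow> ectx C \<Longrightarrow> x = plug C t \<Longrightarrow>
   \<exists>t'. step\<^sup>*\<^sup>* t t' \<and> irreducible t' \<and> step\<^sup>*\<^sup>* (plug C t') c"
proof (induction arbitrary: t rule: converse_rtranclp_induct)
  case base then show ?case using irr_sub by blast
next
  case (step x y)
  show ?case
  proof (cases "irreducible t")
    case True then show ?thesis using step by (auto intro: converse_rtranclp_into_rtranclp)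
  next
    case False
    then obtain t1 where t1: "step t t1" by (auto simp: irreducible_def)
    then have "step x (plug C t1)" using step_ctx step.prems by blast
    then have "y = plug C t1" using determ step.hyps(1) by blast
    then obtain t' where "step\<^sup>*\<^sup>* t1 t'" "irreducible t'" "step\<^sup>*\<^sup>* (plug C t') c"
      using step.IH step.prems by blast
    then show ?thesis using t1 by (auto intro: converse_rtranclp_into_rtranclp)
  qed
qed

lemma ectx_split: "ectx E \<Longrightarrow> pure E \<or> (\<exists>E' F. ectx E' \<and> pure F \<and> E = comp E' (CReset F))"
proof (induction E)
  case Hole then show ?case by simp
next
  case (CAppR v E) then show ?case
    by (auto, metis comp.simps(2) ectx.simps(2))
next
  case (CAppL E s) then show ?case
    by (auto, metis comp.simps(3) ectx.simps(3))
next
  case (CReset E)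
  then have "ectx E" by simp
  from CReset.IH[OF this] show ?case
  proof
    assume "pure E" then show ?thesis using pure_ectx
      by (intro disjI2 exI[of _ Hole] exI[of _ E]) auto
  next
    assume "\<exists>E' F. ectx E' \<and> pure F \<and> E = comp E' (CReset F)"
    then obtain E' F where "ectx E'" "pure F" "E = comp E' (CReset F)" by blast
    then show ?thesis by (intro disjI2 exI[of _ "CReset E'"] exI[of _ F]) auto
  qed
qed

lemma nf_refl: "(\<And>x. R x x) \<Longrightarrow> irreducible a \<Longrightarrow> nf_rel R a a"
proof -
  assume r: "\<And>x. R x x" and "irreducible a"
  from classify[OF this(2)] show ?thesis
  proof (elim disjE exE conjE)
    assume "is_val a" then show ?thesis using r by (simp add: nf_rel_def val_rel_def)
  next
    fix F s assume "pure F" "a = plug F (Shift s)"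
    then show ?thesis using r unfolding nf_rel_def ctx_rel_def by blast
  next
    fix E x v assume h: "ectx E" "is_val v" "a = plug E (App (Var x) v)"
    have "ctx_rel R E E" using ectx_split[OF h(1)] r unfolding ctx_rel_def by blast
    then show ?thesis using h r unfolding nf_rel_def val_rel_def by blast
  qed
qed

definition B :: "trm \<Rightarrow> trm \<Rightarrow> bool" where
  "B a b \<longleftrightarrow> (\<exists>F t. pure F \<and> a = App (Lam (plug_fresh F)) t \<and> b = plug F t)"

definition RR :: "trm \<Rightarrow> trm \<Rightarrow> bool" where
  "RR a b \<longleftrightarrow> a = b \<or> B a b"

lemma ctx_pair: "pure F \<Longrightarrow> ectx E \<Longrightarrow> (\<And>x. Q x x) \<Longrightarrow>
  (\<And>a b. B a b \<Longrightarrow> Q a b) \<Longrightarrow> ctx_rel Q (CAppR (Lam (plug_fresh F)) E) (comp F E)"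
proof -
  assume F: "pure F" and E: "ectx E" and r: "\<And>x. Q x x" and bq: "\<And>a b. B a b \<Longrightarrow> Q a b"
  have key: "Q (plug_fresh (CAppR (Lam (plug_fresh F)) G)) (plug_fresh (comp F G))" for G
  proof -
    have "B (plug_fresh (CAppR (Lam (plug_fresh F)) G)) (plug_fresh (comp F G))"
      unfolding B_def using F by (auto simp: pf_app pf_comp intro!: exI[of _ "liftc F"])
    then show ?thesis using bq by blast
  qed
  from ectx_split[OF E] show ?thesis
  proof (elim disjE exE conjE)
    assume "pure E" then show ?thesis using F key unfolding ctx_rel_def by simp
  next
    fix E' G assume h: "ectx E'" "pure G" "E = comp E' (CReset G)"
    show ?thesis unfolding ctx_rel_def
      apply (rule disjI1)
      apply (rule exI[of _ "CAppR (Lam (plug_fresh F)) E'"], rule exI[of _ G],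
             rule exI[of _ "comp F E'"], rule exI[of _ G])
      using h F key r pure_ectx[OF F] by (simp add: comp_assoc)
  qed
qed

lemma base_sim:
  assumes F: "pure F" and ev: "eval (plug C0 t) a'"
    and C0: "C0 = CAppR (Lam (plug_fresh F)) Hole \<and> C1 = F \<or> C0 = F \<and> C1 = CAppR (Lam (plug_fresh F)) Hole"
    and r: "\<And>x. Q x x" and rp: "\<And>x. P x x" and bq: "\<And>a b. B a b \<Longrightarrow> P a b"
    and qdir: "\<And>E. pure E \<or> ectx E \<Longrightarrow> ctx_rel P (CAppR (Lam (plug_fresh F)) E) (comp F E) \<Longrightarrow>
         ctx_rel Q (comp C0 E) (comp C1 E)"
  shows "\<exists>b'. eval (plug C1 t) b' \<and> nf_rel Q a' b'"
proof -
  let ?L = "Lam (plug_fresh F)"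
  have ec0: "ectx C0" and ec1: "ectx C1" using C0 F pure_ectx by auto
  have pc: "pure C0" "pure C1" using C0 F by auto
  from ev have s: "step\<^sup>*\<^sup>* (plug C0 t) a'" and ia: "irreducible a'" by (auto simp: eval_def)
  obtain t' where tt: "step\<^sup>*\<^sup>* t t'" and it: "irreducible t'" and s2: "step\<^sup>*\<^sup>* (plug C0 t') a'"
    using eval_ctx[OF s ia ec0] by blast
  have st1: "step\<^sup>*\<^sup>* (plug C1 t) (plug C1 t')" using star_ctx[OF tt ec1] .
  from classify[OF it] show ?thesis
  proof (elim disjE exE conjE)
    assume v: "is_val t'"
    have bstep: "step (App ?L t') (plug F t')"
      using step.beta[of Hole t' "plug_fresh F"] v by (simp add: subst_plug_fresh)
    have "step\<^sup>*\<^sup>* (plug C1 t') a'"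
    proof (cases "C0 = F")
      case False
      then have "C0 = CAppR ?L Hole" "C1 = F" using C0 by auto
      then show ?thesis using star_step[OF s2 ia] bstep by simp
    next
      case True
      then have "C1 = CAppR ?L Hole \<or> (C0 = CAppR ?L Hole \<and> C1 = F)" using C0 by auto
      then show ?thesis
      proof
        assume "C1 = CAppR ?L Hole" then show ?thesis using True s2 bstep by auto
      next
        assume "C0 = CAppR ?L Hole \<and> C1 = F"
        then show ?thesis using star_step[OF s2 ia] bstep by simp
      qed
    qed
    then have "eval (plug C1 t) a'" using st1 ia by (auto simp: eval_def)
    then show ?thesis using nf_refl[of Q, OF r ia] by blast
  next
    fix G s assume G: "pure G" "t' = plug G (Shift s)"
    have a': "a' = plug (comp C0 G) (Shift s)"
      using star_irr[OF s2] irr_shift[of "comp C0 G" s] G pc by simp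
    have ev1: "eval (plug C1 t) (plug (comp C1 G) (Shift s))"
      using st1 G irr_shift[of "comp C1 G" s] pc by (simp add: eval_def)
    have "ctx_rel Q (comp C0 G) (comp C1 G)"
      using qdir ctx_pair[of F G P, OF F pure_ectx[OF G(1)] rp bq] G by blast
    then have "nf_rel Q a' (plug (comp C1 G) (Shift s))"
      unfolding nf_rel_def using a' G pc r
      by (intro disjI2 disjI1 exI[of _ "comp C0 G"] exI[of _ "comp C1 G"] exI[of _ s]) auto
    then show ?thesis using ev1 by blast
  next
    fix E x v assume E: "ectx E" "is_val v" "t' = plug E (App (Var x) v)"
    have a': "a' = plug (comp C0 E) (App (Var x) v)"
      using star_irr[OF s2] irr_open[of "comp C0 E" v x] E ec0 by simp
    have ev1: "eval (plug C1 t) (plug (comp C1 E) (App (Var x) v))"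
      using st1 E irr_open[of "comp C1 E" v x] ec1 by (simp add: eval_def)
    have "ctx_rel Q (comp C0 E) (comp C1 E)"
      using qdir ctx_pair[of F E P, OF F E(1) rp bq] E by blast
    moreover have "val_rel Q v v" using r E by (simp add: val_rel_def)
    ultimately have "nf_rel Q a' (plug (comp C1 E) (App (Var x) v))"
      unfolding nf_rel_def using a' E ec0 ec1
      by (intro disjI2 exI[of _ "comp C0 E"] exI[of _ "comp C1 E"] exI[of _ x] exI[of _ v]) auto
    then show ?thesis using ev1 by blast
  qed
qed

lemma ctx_rel_conv: "ctx_rel Q E0 E1 \<Longrightarrow> ctx_rel (conversep Q) E1 E0"
  unfolding ctx_rel_def by auto

lemma sim_RR: "nf_simulation RR"
  unfolding nf_simulation_def
proof (intro allI impI, elim conjE)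
  fix t0 t1 t0' assume "RR t0 t1" "eval t0 t0'"
  then show "\<exists>t1'. eval t1 t1' \<and> nf_rel RR t0' t1'"
  proof (cases "t0 = t1")
    case True then show ?thesis using \<open>eval t0 t0'\<close> nf_refl[of RR] by (auto simp: RR_def eval_def)
  next
    case False
    then obtain F t where F: "pure F" "t0 = App (Lam (plug_fresh F)) t" "t1 = plug F t"
      using \<open>RR t0 t1\<close> by (auto simp: RR_def B_def)
    have bq: "\<And>a b. B a b \<Longrightarrow> RR a b" by (simp add: RR_def)
    have r: "\<And>x. RR x x" by (simp add: RR_def)
    have "\<exists>b'. eval (plug F t) b' \<and> nf_rel RR t0' b'"
      apply (rule base_sim[of F "CAppR (Lam (plug_fresh F)) Hole" t t0' F RR RR])
      using F \<open>eval t0 t0'\<close> r bq by auto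
    then show ?thesis using F by simp
  qed
qed

lemma sim_RR_conv: "nf_simulation (conversep RR)"
  unfolding nf_simulation_def
proof (intro allI impI, elim conjE)
  fix t0 t1 t0' assume "conversep RR t0 t1" "eval t0 t0'"
  then show "\<exists>t1'. eval t1 t1' \<and> nf_rel (conversep RR) t0' t1'"
  proof (cases "t0 = t1")
    case True then show ?thesis using \<open>eval t0 t0'\<close> nf_refl[of "conversep RR"]
      by (auto simp: RR_def eval_def)
  next
    case False
    then obtain F t where F: "pure F" "t1 = App (Lam (plug_fresh F)) t" "t0 = plug F t"
      using \<open>conversep RR t0 t1\<close> by (auto simp: RR_def B_def)
    have bq: "\<And>a b. B a b \<Longrightarrow> RR a b" by (simp add: RR_def)
    have r: "\<And>x. RR x x" by (simp add: RR_def)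
    have r': "\<And>x. conversep RR x x" by (simp add: RR_def)
    have "\<exists>b'. eval (plug (CAppR (Lam (plug_fresh F)) Hole) t) b' \<and> nf_rel (conversep RR) t0' b'"
      apply (rule base_sim[of F F t t0' "CAppR (Lam (plug_fresh F)) Hole" "conversep RR" RR])
      using F \<open>eval t0 t0'\<close> r r' bq ctx_rel_conv by auto
    then show ?thesis using F by simp
  qed
qed

theorem lemma5:
  assumes "pure F"
  shows "nf_bisimilar (App (Lam (plug_fresh F)) t) (plug F t)"
  unfolding nf_bisimilar_def nf_bisimulation_def
  using sim_RR sim_RR_conv assms by (intro exI[of _ RR]) (auto simp: RR_def B_def)

end
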